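(* Fix $\sigma>0$. For $\mathsf{A}>0$ and $\mathcal{E}>0$ let $\mathsf{C}(\mathsf{A},\mathcal{E})=\sup I(X;Y)$, where $Y=X+Z$ with $Z\sim\mathcal{N}(0,\sigma^2)$ independent of $X$, and the supremum is over all distributions of $X$ with $X\ge 0$ almost surely, $\Pr[X>\mathsf{A}]=0$ and $\mathbb{E}[X]\le\mathcal{E}$. Suppose $\alpha=\mathcal{E}/\mathsf{A}$ satisfies $\tfrac12<\alpha\le 1$. Then the capacity-achieving input distribution $Q^*$ (which is unique) satisfies $\mathbb{E}_{Q^*}[X]/\mathsf{A}=\tfrac12$, irrespective of $\alpha$. In particular, the average-power constraint is inactive and $$\mathsf{C}(\mathsf{A},\alpha\mathsf{A})=\mathsf{C}\!\left(\mathsf{A},\tfrac{\mathsf{A}}{2}\right),\qquad \tfrac12<\alpha\le 1.$$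
   Context: Free-space optical intensity channel: input $X\ge 0$ (optical intensity), output $Y=X+Z$ with additive Gaussian noise $Z\sim\mathcal{N}(0,\sigma^2)$ independent of $X$. $\mathsf{A}$ is the peak-power constraint, $\mathcal{E}$ the average-power constraint, and $\alpha=\mathcal{E}/\mathsf{A}\in(0,1]$ their ratio. Mutual information is measured in nats. *)

theory Defs
  imports "HOL-Probability.Probability"
begin

definition chan_space :: "real \<Rightarrow> real measure \<Rightarrow> (real \<times> real) measure" where
  "chan_space \<sigma> Q = Q \<Otimes>\<^sub>M density lborel (normal_density 0 \<sigma>)"

definition chan_MI :: "real \<Rightarrow> real measure \<Rightarrow> real" where
  "chan_MI \<sigma> Q = prob_space.mutual_information (chan_space \<sigma> Q) (exp 1) borel borel
      fst (\<lambda>(x, z). x + z)"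

definition admissible :: "real \<Rightarrow> real \<Rightarrow> real measure \<Rightarrow> bool" where
  "admissible A E Q \<longleftrightarrow> prob_space Q \<and> sets Q = sets borel \<and>
     (AE x in Q. 0 \<le> x) \<and> measure Q {x. x > A} = 0 \<and> (\<integral>x. x \<partial>Q) \<le> E"

definition capacity :: "real \<Rightarrow> real \<Rightarrow> real \<Rightarrow> real" where
  "capacity \<sigma> A E = Sup (chan_MI \<sigma> ` {Q. admissible A E Q})"

definition achieves_capacity :: "real \<Rightarrow> real \<Rightarrow> real \<Rightarrow> real measure \<Rightarrow> bool" where
  "achieves_capacity \<sigma> A E Q \<longleftrightarrow> admissible A E Q \<and> chan_MI \<sigma> Q = capacity \<sigma> A E"

end

theory Submission
  imports Defs
begin

definition pdfQ :: "real \<Rightarrow> real measure \<Rightarrow> real \<Rightarrow> real" where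
  "pdfQ \<sigma> Q y = (\<integral>x. normal_density 0 \<sigma> (y - x) \<partial>Q)"

definition supp :: "real \<Rightarrow> real measure \<Rightarrow> bool" where
  "supp A Q \<longleftrightarrow> real_distribution Q \<and> (AE x in Q. 0 \<le> x \<and> x \<le> A)"

locale chan =
  fixes \<sigma> A :: real
  assumes s: "\<sigma> > 0" and Apos: "A > 0"
begin

definition "cc = 1 / sqrt (2 * pi * \<sigma>\<^sup>2)"

lemma cc_pos: "cc > 0" unfolding cc_def using s by auto

lemma phi_eq: "normal_density 0 \<sigma> z = cc * exp (- z\<^sup>2 / (2 * \<sigma>\<^sup>2))"
  unfolding normal_density_def cc_def by simp

lemma phi_le: "normal_density 0 \<sigma> z \<le> cc"
  unfolding phi_eq using cc_pos by (simp add: mult_le_cancel_left1)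

lemma ln_phi: "ln (normal_density 0 \<sigma> z) = ln cc - z\<^sup>2 / (2 * \<sigma>\<^sup>2)"
  unfolding phi_eq using cc_pos by (simp add: ln_mult)

definition "Lb y = cc * exp (- (y\<^sup>2 + A\<^sup>2) / \<sigma>\<^sup>2)"
definition "Ub y = cc * exp (A\<^sup>2 / (2 * \<sigma>\<^sup>2)) * exp (- y\<^sup>2 / (4 * \<sigma>\<^sup>2))"

lemma phi_lower: assumes "0 \<le> x" "x \<le> A" shows "Lb y \<le> normal_density 0 \<sigma> (y - x)"
proof -
  have "(y - x)\<^sup>2 \<le> 2 * (y\<^sup>2 + A\<^sup>2)"
  proof -
    have e: "2 * y\<^sup>2 + 2 * x\<^sup>2 - (y - x)\<^sup>2 = (y + x)\<^sup>2" by (simp add: power2_eq_square algebra_simps)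
    have "(y - x)\<^sup>2 \<le> 2 * y\<^sup>2 + 2 * x\<^sup>2" using e zero_le_power2[of "y + x"] by linarith
    moreover have "x\<^sup>2 \<le> A\<^sup>2" using assms by (simp add: power_mono)
    ultimately show ?thesis by simp
  qed
  then have "(y - x)\<^sup>2 / (2 * \<sigma>\<^sup>2) \<le> 2 * (y\<^sup>2 + A\<^sup>2) / (2 * \<sigma>\<^sup>2)"
    by (rule divide_right_mono) simp
  moreover have "2 * (y\<^sup>2 + A\<^sup>2) / (2 * \<sigma>\<^sup>2) = (y\<^sup>2 + A\<^sup>2) / \<sigma>\<^sup>2" using s by (simp add: field_simps)
  ultimately have "- (y\<^sup>2 + A\<^sup>2) / \<sigma>\<^sup>2 \<le> - (y - x)\<^sup>2 / (2 * \<sigma>\<^sup>2)"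
    unfolding minus_divide_left[symmetric] by linarith
  then show ?thesis unfolding Lb_def phi_eq using cc_pos by simp
qed

lemma phi_upper: assumes "0 \<le> x" "x \<le> A" shows "normal_density 0 \<sigma> (y - x) \<le> Ub y"
proof -
  have "y\<^sup>2 / 2 - A\<^sup>2 \<le> (y - x)\<^sup>2"
  proof -
    have e: "2 * (y - x)\<^sup>2 + 2 * x\<^sup>2 - y\<^sup>2 = (y - 2 * x)\<^sup>2" by (simp add: power2_eq_square algebra_simps)
    have "y\<^sup>2 \<le> 2 * (y - x)\<^sup>2 + 2 * x\<^sup>2" using e zero_le_power2[of "y - 2 * x"] by linarith
    moreover have "x\<^sup>2 \<le> A\<^sup>2" using assms by (simp add: power_mono)
    ultimately show ?thesis by simp
  qed
  then have "(y\<^sup>2 / 2 - A\<^sup>2) / (2 * \<sigma>\<^sup>2) \<le> (y - x)\<^sup>2 / (2 * \<sigma>\<^sup>2)"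
    by (rule divide_right_mono) simp
  moreover have "(y\<^sup>2 / 2 - A\<^sup>2) / (2 * \<sigma>\<^sup>2) = y\<^sup>2 / (4 * \<sigma>\<^sup>2) - A\<^sup>2 / (2 * \<sigma>\<^sup>2)"
    using s by (simp add: field_simps)
  ultimately have "- (y - x)\<^sup>2 / (2 * \<sigma>\<^sup>2) \<le> A\<^sup>2 / (2 * \<sigma>\<^sup>2) + - y\<^sup>2 / (4 * \<sigma>\<^sup>2)"
    by simp
  then have "exp (- (y - x)\<^sup>2 / (2 * \<sigma>\<^sup>2)) \<le> exp (A\<^sup>2 / (2 * \<sigma>\<^sup>2)) * exp (- y\<^sup>2 / (4 * \<sigma>\<^sup>2))"
    by (simp add: exp_add[symmetric])
  then show ?thesis unfolding Ub_def phi_eq using cc_pos by simp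
qed

lemma Lb_pos: "Lb y > 0" unfolding Lb_def using cc_pos by simp

lemma Ub_pos: "Ub y > 0" unfolding Ub_def using cc_pos by simp

lemma phi_integrable:
  assumes "real_distribution Q"
  shows "integrable Q (\<lambda>x. normal_density 0 \<sigma> (y - x))"
proof -
  interpret real_distribution Q by fact
  show ?thesis
    by (rule integrable_const_bound[where B=cc]) (auto simp: phi_le)
qed

lemma pdf_measurable[measurable]:
  assumes "real_distribution Q"
  shows "pdfQ \<sigma> Q \<in> borel_measurable borel"
proof -
  interpret real_distribution Q by fact
  show ?thesis unfolding pdfQ_def[abs_def]
    by (rule borel_measurable_lebesgue_integral) measurable
qed

lemma pdf_lower:
  assumes "supp A Q" shows "Lb y \<le> pdfQ \<sigma> Q y"
proof -
  interpret real_distribution Q using assms unfolding supp_def by auto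
  have ae: "AE x in Q. 0 \<le> x \<and> x \<le> A" using assms unfolding supp_def by auto
  have "Lb y = (\<integral>x. Lb y \<partial>Q)" using prob_space by simp
  also have "\<dots> \<le> pdfQ \<sigma> Q y" unfolding pdfQ_def
    using ae phi_integrable[OF real_distribution_axioms] phi_lower
    by (intro integral_mono_AE) auto
  finally show ?thesis .
qed

lemma pdf_upper:
  assumes "supp A Q" shows "pdfQ \<sigma> Q y \<le> Ub y"
proof -
  interpret real_distribution Q using assms unfolding supp_def by auto
  have ae: "AE x in Q. 0 \<le> x \<and> x \<le> A" using assms unfolding supp_def by auto
  have "pdfQ \<sigma> Q y \<le> (\<integral>x. Ub y \<partial>Q)" unfolding pdfQ_def
    using ae phi_integrable[OF real_distribution_axioms] phi_upper
    by (intro integral_mono_AE) auto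
  also have "\<dots> = Ub y" using prob_space by simp
  finally show ?thesis .
qed

lemma pdf_le_cc:
  assumes "real_distribution Q" shows "pdfQ \<sigma> Q y \<le> cc"
proof -
  interpret real_distribution Q by fact
  have "pdfQ \<sigma> Q y \<le> (\<integral>x. cc \<partial>Q)" unfolding pdfQ_def
    using phi_integrable[OF real_distribution_axioms] phi_le
    by (intro integral_mono_AE) auto
  also have "\<dots> = cc" using prob_space by simp
  finally show ?thesis .
qed

lemma pdf_pos: assumes "supp A Q" shows "0 < pdfQ \<sigma> Q y"
  using pdf_lower[OF assms, of y] Lb_pos[of y] by linarith

definition "Env y = Ub y * (\<bar>ln cc\<bar> + (y\<^sup>2 + A\<^sup>2) / \<sigma>\<^sup>2)"

lemma abs_ln_between:
  assumes "0 < l" "l \<le> p" "p \<le> cc"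
  shows "\<bar>ln p\<bar> \<le> \<bar>ln cc\<bar> + \<bar>ln l - ln cc\<bar>"
proof -
  have "ln l \<le> ln p" "ln p \<le> ln cc" using assms by auto
  then show ?thesis by linarith
qed

lemma ln_Lb: "ln (Lb y) - ln cc = - (y\<^sup>2 + A\<^sup>2) / \<sigma>\<^sup>2"
  unfolding Lb_def using cc_pos by (simp add: ln_mult)

lemma abs_ln_bound:
  assumes "0 < p" "Lb y \<le> p" "p \<le> cc"
  shows "\<bar>ln p\<bar> \<le> \<bar>ln cc\<bar> + (y\<^sup>2 + A\<^sup>2) / \<sigma>\<^sup>2"
proof -
  have "\<bar>ln (Lb y) - ln cc\<bar> = (y\<^sup>2 + A\<^sup>2) / \<sigma>\<^sup>2"
    unfolding ln_Lb by (simp add: abs_minus_cancel divide_nonneg_nonneg)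
  with abs_ln_between[OF Lb_pos assms(2,3)] show ?thesis by simp
qed

lemma plogp_bound:
  assumes "supp A Q"
  shows "\<bar>pdfQ \<sigma> Q y * ln (pdfQ \<sigma> Q y)\<bar> \<le> Env y"
proof -
  let ?p = "pdfQ \<sigma> Q y"
  have p: "0 < ?p" "Lb y \<le> ?p" "?p \<le> cc" "?p \<le> Ub y"
    using pdf_pos[OF assms] pdf_lower[OF assms] pdf_upper[OF assms]
      pdf_le_cc[of Q] assms unfolding supp_def by auto
  have "\<bar>?p * ln ?p\<bar> = ?p * \<bar>ln ?p\<bar>" using p by (simp add: abs_mult)
  also have "\<dots> \<le> Ub y * (\<bar>ln cc\<bar> + (y\<^sup>2 + A\<^sup>2) / \<sigma>\<^sup>2)"
    using p abs_ln_bound[OF p(1-3)] by (intro mult_mono) auto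
  finally show ?thesis unfolding Env_def .
qed

lemma Env_integrable: "integrable lborel Env"
proof -
  define s where "s = sqrt 2 * \<sigma>"
  have s2: "s\<^sup>2 = 2 * \<sigma>\<^sup>2" unfolding s_def by (simp add: power_mult_distrib)
  define K where "K = cc * exp (A\<^sup>2 / (2 * \<sigma>\<^sup>2)) * sqrt (2 * pi * s\<^sup>2)"
  have nd: "exp (- y\<^sup>2 / (4 * \<sigma>\<^sup>2)) = sqrt (2 * pi * s\<^sup>2) * normal_density 0 s y" for y
    unfolding normal_density_def s2 using s by (simp add: field_simps)
  have eq: "Env y = K * (\<bar>ln cc\<bar> + A\<^sup>2 / \<sigma>\<^sup>2) * normal_density 0 s y
      + (K / \<sigma>\<^sup>2) * (normal_density 0 s y * (y - 0) ^ 2)" for y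
    unfolding Env_def Ub_def K_def nd by (simp add: field_simps add_divide_distrib)
  have i1: "integrable lborel (\<lambda>y. K * (\<bar>ln cc\<bar> + A\<^sup>2 / \<sigma>\<^sup>2) * normal_density 0 s y)"
    by (rule integrable_mult_right, rule integrable_normal_density) (use s in \<open>simp add: s_def\<close>)
  have i2: "integrable lborel (\<lambda>y. (K / \<sigma>\<^sup>2) * (normal_density 0 s y * (y - 0) ^ 2))"
    by (rule integrable_mult_right, rule integrable_normal_moment) (use s in \<open>simp add: s_def\<close>)
  show ?thesis unfolding eq[abs_def] using Bochner_Integration.integrable_add[OF i1 i2] .
qed

end

context chan
begin

abbreviation "NN \<equiv> density lborel (normal_density 0 \<sigma>)"

lemma NN_prob: "prob_space NN" using s by (rule prob_space_normal_density)

lemma sets_NN[measurable_cong, simp]: "sets NN = sets borel" by simp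

lemma keyK:
  assumes Q: "real_distribution Q"
    and h[measurable]: "h \<in> borel_measurable (borel \<Otimes>\<^sub>M borel)"
  shows "(\<integral>\<^sup>+\<omega>. h (fst \<omega>, fst \<omega> + snd \<omega>) \<partial>(Q \<Otimes>\<^sub>M NN))
     = (\<integral>\<^sup>+x. \<integral>\<^sup>+y. ennreal (normal_density 0 \<sigma> (y - x)) * h (x, y) \<partial>lborel \<partial>Q)"
proof -
  interpret Q: real_distribution Q by fact
  interpret N: prob_space NN by (rule NN_prob)
  interpret pair_sigma_finite Q NN ..
  have "(\<integral>\<^sup>+\<omega>. h (fst \<omega>, fst \<omega> + snd \<omega>) \<partial>(Q \<Otimes>\<^sub>M NN))
      = (\<integral>\<^sup>+x. \<integral>\<^sup>+z. h (x, x + z) \<partial>NN \<partial>Q)"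
  proof -
    have meas: "(\<lambda>\<omega>. h (fst \<omega>, fst \<omega> + snd \<omega>)) \<in> borel_measurable (Q \<Otimes>\<^sub>M NN)" by measurable
    show ?thesis using N.nn_integral_fst[OF meas] by simp
  qed
  also have "\<dots> = (\<integral>\<^sup>+x. \<integral>\<^sup>+z. ennreal (normal_density 0 \<sigma> z) * h (x, x + z) \<partial>lborel \<partial>Q)"
    by (simp add: nn_integral_density)
  also have "\<dots> = (\<integral>\<^sup>+x. \<integral>\<^sup>+y. ennreal (normal_density 0 \<sigma> (y - x)) * h (x, y) \<partial>lborel \<partial>Q)"
  proof (rule nn_integral_cong)
    fix x
    show "(\<integral>\<^sup>+z. ennreal (normal_density 0 \<sigma> z) * h (x, x + z) \<partial>lborel)
        = (\<integral>\<^sup>+y. ennreal (normal_density 0 \<sigma> (y - x)) * h (x, y) \<partial>lborel)"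
      by (subst nn_integral_real_affine[where c=1 and t=x]) simp_all
  qed
  finally show ?thesis .
qed

lemma distr_Y:
  assumes Q: "real_distribution Q"
  shows "distr (Q \<Otimes>\<^sub>M NN) lborel (\<lambda>(x, z). x + z) = density lborel (pdfQ \<sigma> Q)"
proof (rule measure_eqI)
  interpret Q: real_distribution Q by fact
  interpret N: prob_space NN by (rule NN_prob)
  interpret QL: pair_sigma_finite Q lborel ..
  show "sets (distr (Q \<Otimes>\<^sub>M NN) lborel (\<lambda>(x, z). x + z)) = sets (density lborel (pdfQ \<sigma> Q))"
    by simp
  fix C assume "C \<in> sets (distr (Q \<Otimes>\<^sub>M NN) lborel (\<lambda>(x, z). x + z))"
  then have C[measurable]: "C \<in> sets borel" by simp
  have "emeasure (distr (Q \<Otimes>\<^sub>M NN) lborel (\<lambda>(x, z). x + z)) C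
      = (\<integral>\<^sup>+y. indicator C y \<partial>distr (Q \<Otimes>\<^sub>M NN) lborel (\<lambda>(x, z). x + z))"
    by (subst nn_integral_indicator) simp_all
  also have "\<dots> = (\<integral>\<^sup>+\<omega>. indicator C (fst \<omega> + snd \<omega>) \<partial>(Q \<Otimes>\<^sub>M NN))"
    by (subst nn_integral_distr) (simp_all add: split_beta)
  also have "\<dots> = (\<integral>\<^sup>+x. \<integral>\<^sup>+y. ennreal (normal_density 0 \<sigma> (y - x)) * indicator C y \<partial>lborel \<partial>Q)"
    using keyK[OF Q, of "\<lambda>p. indicator C (snd p)"] by simp
  also have "\<dots> = (\<integral>\<^sup>+y. \<integral>\<^sup>+x. ennreal (normal_density 0 \<sigma> (y - x)) * indicator C y \<partial>Q \<partial>lborel)"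
    by (subst QL.Fubini') simp_all
  also have "\<dots> = (\<integral>\<^sup>+y. ennreal (pdfQ \<sigma> Q y) * indicator C y \<partial>lborel)"
  proof (rule nn_integral_cong)
    fix y
    have "(\<integral>\<^sup>+x. ennreal (normal_density 0 \<sigma> (y - x)) \<partial>Q) = ennreal (pdfQ \<sigma> Q y)"
      unfolding pdfQ_def using phi_integrable[OF Q]
      by (intro nn_integral_eq_integral) auto
    then show "(\<integral>\<^sup>+x. ennreal (normal_density 0 \<sigma> (y - x)) * indicator C y \<partial>Q)
        = ennreal (pdfQ \<sigma> Q y) * indicator C y"
      by (subst nn_integral_multc) simp_all
  qed
  also have "\<dots> = emeasure (density lborel (pdfQ \<sigma> Q)) C"
    using pdf_measurable[OF Q] by (subst emeasure_density) simp_all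
  finally show "emeasure (distr (Q \<Otimes>\<^sub>M NN) lborel (\<lambda>(x, z). x + z)) C
      = emeasure (density lborel (pdfQ \<sigma> Q)) C" .
qed

lemma distr_XY:
  assumes Q: "real_distribution Q"
  shows "distr (Q \<Otimes>\<^sub>M NN) (Q \<Otimes>\<^sub>M lborel) (\<lambda>\<omega>. (fst \<omega>, case \<omega> of (x, z) \<Rightarrow> x + z))
     = density (Q \<Otimes>\<^sub>M lborel) (\<lambda>p. ennreal (normal_density 0 \<sigma> (snd p - fst p)))"
proof (rule measure_eqI)
  interpret Q: real_distribution Q by fact
  interpret N: prob_space NN by (rule NN_prob)
  interpret QL: pair_sigma_finite Q lborel ..
  have sQL[measurable_cong]: "sets (Q \<Otimes>\<^sub>M lborel) = sets (borel \<Otimes>\<^sub>M borel)"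
    by (intro sets_pair_measure_cong) simp_all
  show "sets (distr (Q \<Otimes>\<^sub>M NN) (Q \<Otimes>\<^sub>M lborel) (\<lambda>\<omega>. (fst \<omega>, case \<omega> of (x, z) \<Rightarrow> x + z)))
     = sets (density (Q \<Otimes>\<^sub>M lborel) (\<lambda>p. ennreal (normal_density 0 \<sigma> (snd p - fst p))))"
    by simp
  fix C assume "C \<in> sets (distr (Q \<Otimes>\<^sub>M NN) (Q \<Otimes>\<^sub>M lborel) (\<lambda>\<omega>. (fst \<omega>, case \<omega> of (x, z) \<Rightarrow> x + z)))"
  then have C[measurable]: "C \<in> sets (borel \<Otimes>\<^sub>M borel)" using sQL by simp
  have meas: "(\<lambda>\<omega>. (fst \<omega>, case \<omega> of (x, z) \<Rightarrow> x + z)) \<in> measurable (Q \<Otimes>\<^sub>M NN) (Q \<Otimes>\<^sub>M lborel)"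
    by measurable
  have "emeasure (distr (Q \<Otimes>\<^sub>M NN) (Q \<Otimes>\<^sub>M lborel) (\<lambda>\<omega>. (fst \<omega>, case \<omega> of (x, z) \<Rightarrow> x + z))) C
      = (\<integral>\<^sup>+p. indicator C p \<partial>distr (Q \<Otimes>\<^sub>M NN) (Q \<Otimes>\<^sub>M lborel) (\<lambda>\<omega>. (fst \<omega>, case \<omega> of (x, z) \<Rightarrow> x + z)))"
    using sQL by (subst nn_integral_indicator) simp_all
  also have "\<dots> = (\<integral>\<^sup>+\<omega>. indicator C (fst \<omega>, fst \<omega> + snd \<omega>) \<partial>(Q \<Otimes>\<^sub>M NN))"
    using meas by (subst nn_integral_distr) (simp_all add: split_beta)
  also have "\<dots> = (\<integral>\<^sup>+x. \<integral>\<^sup>+y. ennreal (normal_density 0 \<sigma> (y - x)) * indicator C (x, y) \<partial>lborel \<partial>Q)"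
    using keyK[OF Q, of "indicator C"] by simp
  also have "\<dots> = (\<integral>\<^sup>+p. ennreal (normal_density 0 \<sigma> (snd p - fst p)) * indicator C p \<partial>(Q \<Otimes>\<^sub>M lborel))"
    by (subst lborel.nn_integral_fst[symmetric]) simp_all
  also have "\<dots> = emeasure (density (Q \<Otimes>\<^sub>M lborel) (\<lambda>p. ennreal (normal_density 0 \<sigma> (snd p - fst p)))) C"
    using sQL by (subst emeasure_density) simp_all
  finally show "emeasure (distr (Q \<Otimes>\<^sub>M NN) (Q \<Otimes>\<^sub>M lborel) (\<lambda>\<omega>. (fst \<omega>, case \<omega> of (x, z) \<Rightarrow> x + z))) C
      = emeasure (density (Q \<Otimes>\<^sub>M lborel) (\<lambda>p. ennreal (normal_density 0 \<sigma> (snd p - fst p)))) C" .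
qed

end

context chan
begin

definition "K0 = (\<integral>z. normal_density 0 \<sigma> z * ln (normal_density 0 \<sigma> z) \<partial>lborel)"

lemma philn_int: "integrable lborel (\<lambda>z. normal_density 0 \<sigma> z * ln (normal_density 0 \<sigma> z))"
proof (rule Bochner_Integration.integrable_bound)
  let ?f = "\<lambda>z. \<bar>ln cc\<bar> * normal_density 0 \<sigma> z + (1 / (2 * \<sigma>\<^sup>2)) * (normal_density 0 \<sigma> z * (z - 0) ^ 2)"
  have i1: "integrable lborel (\<lambda>z. \<bar>ln cc\<bar> * normal_density 0 \<sigma> z)"
    by (rule integrable_mult_right, rule integrable_normal_density) (use s in simp)
  have i2: "integrable lborel (\<lambda>z. (1 / (2 * \<sigma>\<^sup>2)) * (normal_density 0 \<sigma> z * (z - 0) ^ 2))"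
    by (rule integrable_mult_right, rule integrable_normal_moment) (use s in simp)
  show "integrable lborel ?f" using Bochner_Integration.integrable_add[OF i1 i2] .
  show "(\<lambda>z. normal_density 0 \<sigma> z * ln (normal_density 0 \<sigma> z)) \<in> borel_measurable lborel" by simp
  show "AE z in lborel. norm (normal_density 0 \<sigma> z * ln (normal_density 0 \<sigma> z)) \<le> norm (?f z)"
  proof (rule AE_I2)
    fix z
    have p: "0 < normal_density 0 \<sigma> z" using s by (rule normal_density_pos)
    have "\<bar>ln (normal_density 0 \<sigma> z)\<bar> \<le> \<bar>ln cc\<bar> + z\<^sup>2 / (2 * \<sigma>\<^sup>2)"
      unfolding ln_phi by (simp add: abs_diff_le_iff) (smt (verit) zero_le_divide_iff zero_le_power2 zero_less_power)
    then have "normal_density 0 \<sigma> z * \<bar>ln (normal_density 0 \<sigma> z)\<bar> \<le> normal_density 0 \<sigma> z * (\<bar>ln cc\<bar> + z\<^sup>2 / (2 * \<sigma>\<^sup>2))"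
      using p by (intro mult_left_mono) auto
    moreover have "0 \<le> ?f z" using p s by (intro add_nonneg_nonneg mult_nonneg_nonneg) auto
    ultimately show "norm (normal_density 0 \<sigma> z * ln (normal_density 0 \<sigma> z)) \<le> norm (?f z)"
      using p by (simp add: abs_mult field_simps)
  qed
qed

lemma trans_int:
  fixes g :: "real \<Rightarrow> real"
  assumes Q: "real_distribution Q" and gi: "integrable lborel g" and gm[measurable]: "g \<in> borel_measurable borel"
  shows "integrable (Q \<Otimes>\<^sub>M lborel) (\<lambda>p. g (snd p - fst p))"
    and "(\<integral>p. g (snd p - fst p) \<partial>(Q \<Otimes>\<^sub>M lborel)) = (\<integral>z. g z \<partial>lborel)"
proof -
  interpret Q: real_distribution Q by fact
  interpret QL: pair_sigma_finite Q lborel ..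
  have tr: "integrable lborel (\<lambda>y. h (y - x))" if "integrable lborel h" for x and h :: "real \<Rightarrow> real"
    using lborel_integrable_real_affine[OF that, of 1 "-x"] by simp
  have ti: "(\<integral>y. h (y - x) \<partial>lborel) = (\<integral>z. h z \<partial>lborel)" for x and h :: "real \<Rightarrow> real"
    using lborel_integral_real_affine[of 1 "\<lambda>y. h (y - x)" x] by simp
  have gn: "integrable lborel (\<lambda>z. norm (g z))" using gi by simp
  show int: "integrable (Q \<Otimes>\<^sub>M lborel) (\<lambda>p. g (snd p - fst p))"
  proof (rule QL.Fubini_integrable)
    show "(\<lambda>p. g (snd p - fst p)) \<in> borel_measurable (Q \<Otimes>\<^sub>M lborel)" by measurable
    show "integrable Q (\<lambda>x. \<integral>y. norm (g (snd (x, y) - fst (x, y))) \<partial>lborel)"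
      using ti[of "\<lambda>z. norm (g z)"] by simp
    show "AE x in Q. integrable lborel (\<lambda>y. g (snd (x, y) - fst (x, y)))"
      using tr[OF gi] by simp
  qed
  have "(\<integral>p. g (snd p - fst p) \<partial>(Q \<Otimes>\<^sub>M lborel)) = (\<integral>x. \<integral>y. g (snd (x, y) - fst (x, y)) \<partial>lborel \<partial>Q)"
    using QL.integral_fst'[OF int] by simp
  also have "\<dots> = (\<integral>x. (\<integral>z. g z \<partial>lborel) \<partial>Q)" using ti[of g] by simp
  also have "\<dots> = (\<integral>z. g z \<partial>lborel)" using Q.prob_space by simp
  finally show "(\<integral>p. g (snd p - fst p) \<partial>(Q \<Otimes>\<^sub>M lborel)) = (\<integral>z. g z \<partial>lborel)" .
qed

lemma Env_measurable[measurable]: "Env \<in> borel_measurable borel"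
  unfolding Env_def[abs_def] Ub_def by measurable

lemma Env_prod_int:
  assumes Q: "real_distribution Q"
  shows "integrable (Q \<Otimes>\<^sub>M lborel) (\<lambda>p. Env (snd p))"
proof -
  interpret Q: real_distribution Q by fact
  interpret QL: pair_sigma_finite Q lborel ..
  show ?thesis
  proof (rule QL.Fubini_integrable)
    show "(\<lambda>p. Env (snd p)) \<in> borel_measurable (Q \<Otimes>\<^sub>M lborel)" by measurable
    show "integrable Q (\<lambda>x. \<integral>y. norm (Env (snd (x, y))) \<partial>lborel)" by simp
    show "AE x in Q. integrable lborel (\<lambda>y. Env (snd (x, y)))" using Env_integrable by simp
  qed
qed

lemma f2_int:
  assumes Q: "supp A Q"
  shows "integrable (Q \<Otimes>\<^sub>M lborel) (\<lambda>p. normal_density 0 \<sigma> (snd p - fst p) * ln (pdfQ \<sigma> Q (snd p)))"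
proof -
  have RD: "real_distribution Q" using Q unfolding supp_def by auto
  interpret Q: real_distribution Q by fact
  interpret QL: pair_sigma_finite Q lborel ..
  have [measurable]: "pdfQ \<sigma> Q \<in> borel_measurable borel" by (rule pdf_measurable[OF RD])
  show ?thesis
  proof (rule Bochner_Integration.integrable_bound[OF Env_prod_int[OF RD]])
    show "(\<lambda>p. normal_density 0 \<sigma> (snd p - fst p) * ln (pdfQ \<sigma> Q (snd p))) \<in> borel_measurable (Q \<Otimes>\<^sub>M lborel)"
      by measurable
    have ae: "AE x in Q. 0 \<le> x \<and> x \<le> A" using Q unfolding supp_def by auto
    show "AE p in Q \<Otimes>\<^sub>M lborel. norm (normal_density 0 \<sigma> (snd p - fst p) * ln (pdfQ \<sigma> Q (snd p))) \<le> norm (Env (snd p))"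
    proof (rule QL.AE_pair_measure)
      show "{p \<in> space (Q \<Otimes>\<^sub>M lborel). norm (normal_density 0 \<sigma> (snd p - fst p) * ln (pdfQ \<sigma> Q (snd p))) \<le> norm (Env (snd p))} \<in> sets (Q \<Otimes>\<^sub>M lborel)"
        by measurable
      show "AE x in Q. AE y in lborel. norm (normal_density 0 \<sigma> (snd (x, y) - fst (x, y)) * ln (pdfQ \<sigma> Q (snd (x, y)))) \<le> norm (Env (snd (x, y)))"
        using ae
      proof eventually_elim
        case (elim x)
        show ?case
        proof (rule AE_I2)
          fix y
          have p: "0 < pdfQ \<sigma> Q y" "Lb y \<le> pdfQ \<sigma> Q y" "pdfQ \<sigma> Q y \<le> cc"
            using pdf_pos[OF Q] pdf_lower[OF Q] pdf_le_cc[OF RD] by auto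
          have b: "\<bar>ln (pdfQ \<sigma> Q y)\<bar> \<le> \<bar>ln cc\<bar> + (y\<^sup>2 + A\<^sup>2) / \<sigma>\<^sup>2"
            by (rule abs_ln_bound[OF p])
          have u: "normal_density 0 \<sigma> (y - x) \<le> Ub y" using phi_upper elim by auto
          have "\<bar>normal_density 0 \<sigma> (y - x) * ln (pdfQ \<sigma> Q y)\<bar> = normal_density 0 \<sigma> (y - x) * \<bar>ln (pdfQ \<sigma> Q y)\<bar>"
            by (simp add: abs_mult)
          also have "\<dots> \<le> Ub y * (\<bar>ln cc\<bar> + (y\<^sup>2 + A\<^sup>2) / \<sigma>\<^sup>2)"
            using u b Ub_pos[of y] by (intro mult_mono) auto
          also have "\<dots> = Env y" unfolding Env_def ..
          also have "\<dots> \<le> \<bar>Env y\<bar>" by simp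
          finally show "norm (normal_density 0 \<sigma> (snd (x, y) - fst (x, y)) * ln (pdfQ \<sigma> Q (snd (x, y)))) \<le> norm (Env (snd (x, y)))"
            by simp
        qed
      qed
    qed
  qed
qed

lemma f2_integral:
  assumes Q: "supp A Q"
  shows "(\<integral>p. normal_density 0 \<sigma> (snd p - fst p) * ln (pdfQ \<sigma> Q (snd p)) \<partial>(Q \<Otimes>\<^sub>M lborel))
     = (\<integral>y. pdfQ \<sigma> Q y * ln (pdfQ \<sigma> Q y) \<partial>lborel)"
proof -
  have RD: "real_distribution Q" using Q unfolding supp_def by auto
  interpret Q: real_distribution Q by fact
  interpret QL: pair_sigma_finite Q lborel ..
  have int: "integrable (Q \<Otimes>\<^sub>M lborel) (case_prod (\<lambda>x y. normal_density 0 \<sigma> (y - x) * ln (pdfQ \<sigma> Q y)))"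
    using f2_int[OF Q] by (simp add: split_beta')
  have "(\<integral>p. normal_density 0 \<sigma> (snd p - fst p) * ln (pdfQ \<sigma> Q (snd p)) \<partial>(Q \<Otimes>\<^sub>M lborel))
      = (\<integral>y. \<integral>x. normal_density 0 \<sigma> (y - x) * ln (pdfQ \<sigma> Q y) \<partial>Q \<partial>lborel)"
    using QL.integral_snd[OF int] by (simp add: split_beta')
  also have "\<dots> = (\<integral>y. pdfQ \<sigma> Q y * ln (pdfQ \<sigma> Q y) \<partial>lborel)"
    unfolding pdfQ_def by simp
  finally show ?thesis .
qed

end

context chan
begin

lemma MI_formula:
  assumes Q: "supp A Q"
  shows "chan_MI \<sigma> Q = K0 - (\<integral>y. pdfQ \<sigma> Q y * ln (pdfQ \<sigma> Q y) \<partial>lborel)"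
proof -
  have RD: "real_distribution Q" using Q unfolding supp_def by auto
  interpret Q: real_distribution Q by fact
  interpret N: prob_space NN by (rule NN_prob)
  interpret PP: pair_prob_space Q NN ..
  have PM: "prob_space (Q \<Otimes>\<^sub>M NN)" by unfold_locales
  interpret I: information_space "Q \<Otimes>\<^sub>M NN" "exp 1"
    by (rule information_space.intro[OF PM]) (simp add: information_space_axioms_def)
  have d1: "distr (Q \<Otimes>\<^sub>M NN) borel fst = distr (Q \<Otimes>\<^sub>M NN) Q fst" by (rule distr_cong) simp_all
  have d2: "distr (Q \<Otimes>\<^sub>M NN) borel (\<lambda>(x, z). x + z) = distr (Q \<Otimes>\<^sub>M NN) lborel (\<lambda>(x, z). x + z)"
    by (rule distr_cong) simp_all
  have sQL: "sets (Q \<Otimes>\<^sub>M lborel) = sets (borel \<Otimes>\<^sub>M borel)"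
    by (intro sets_pair_measure_cong) simp_all
  have d3: "distr (Q \<Otimes>\<^sub>M NN) (borel \<Otimes>\<^sub>M borel) (\<lambda>\<omega>. (fst \<omega>, case \<omega> of (x, z) \<Rightarrow> x + z))
     = distr (Q \<Otimes>\<^sub>M NN) (Q \<Otimes>\<^sub>M lborel) (\<lambda>\<omega>. (fst \<omega>, case \<omega> of (x, z) \<Rightarrow> x + z))"
    by (rule distr_cong[OF refl sQL[symmetric]]) simp
  have cm: "chan_MI \<sigma> Q = prob_space.mutual_information (Q \<Otimes>\<^sub>M NN) (exp 1) Q lborel fst (\<lambda>(x, z). x + z)"
    unfolding chan_MI_def chan_space_def prob_space.mutual_information_def[OF PM] d1 d2 d3 ..
  have Px: "distributed (Q \<Otimes>\<^sub>M NN) Q fst (\<lambda>x. ennreal ((\<lambda>_. 1::real) x))"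
    unfolding distributed_def
  proof (intro conjI)
    show "distr (Q \<Otimes>\<^sub>M NN) Q fst = density Q (\<lambda>x. ennreal ((\<lambda>_. 1::real) x))"
      using N.distr_pair_fst by (simp only: ennreal_1 density_1)
    show "(\<lambda>x. ennreal ((\<lambda>_. 1::real) x)) \<in> borel_measurable Q" by simp
    show "fst \<in> measurable (Q \<Otimes>\<^sub>M NN) Q" by (rule measurable_fst)
  qed
  have Py: "distributed (Q \<Otimes>\<^sub>M NN) lborel (\<lambda>(x, z). x + z) (\<lambda>x. ennreal (pdfQ \<sigma> Q x))"
    unfolding distributed_def
  proof (intro conjI)
    show "distr (Q \<Otimes>\<^sub>M NN) lborel (\<lambda>(x, z). x + z) = density lborel (\<lambda>x. ennreal (pdfQ \<sigma> Q x))"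
      by (rule distr_Y[OF RD])
    show "(\<lambda>x. ennreal (pdfQ \<sigma> Q x)) \<in> borel_measurable lborel"
      using pdf_measurable[OF RD] by measurable
    show "(\<lambda>(x, z). x + z) \<in> measurable (Q \<Otimes>\<^sub>M NN) lborel" by measurable
  qed
  have Pxy: "distributed (Q \<Otimes>\<^sub>M NN) (Q \<Otimes>\<^sub>M lborel) (\<lambda>\<omega>. (fst \<omega>, case \<omega> of (x, z) \<Rightarrow> x + z))
       (\<lambda>x. ennreal ((\<lambda>p. normal_density 0 \<sigma> (snd p - fst p)) x))"
    unfolding distributed_def
  proof (intro conjI)
    show "distr (Q \<Otimes>\<^sub>M NN) (Q \<Otimes>\<^sub>M lborel) (\<lambda>\<omega>. (fst \<omega>, case \<omega> of (x, z) \<Rightarrow> x + z))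
       = density (Q \<Otimes>\<^sub>M lborel) (\<lambda>x. ennreal ((\<lambda>p. normal_density 0 \<sigma> (snd p - fst p)) x))"
      using distr_XY[OF RD] by (simp only:)
    show "(\<lambda>x. ennreal ((\<lambda>p. normal_density 0 \<sigma> (snd p - fst p)) x)) \<in> borel_measurable (Q \<Otimes>\<^sub>M lborel)"
      by measurable
    show "(\<lambda>\<omega>. (fst \<omega>, case \<omega> of (x, z) \<Rightarrow> x + z)) \<in> measurable (Q \<Otimes>\<^sub>M NN) (Q \<Otimes>\<^sub>M lborel)"
      by measurable
  qed
  have MI: "prob_space.mutual_information (Q \<Otimes>\<^sub>M NN) (exp 1) Q lborel fst (\<lambda>(x, z). x + z)
      = (\<integral>p. normal_density 0 \<sigma> (snd p - fst p) * log (exp 1) (normal_density 0 \<sigma> (snd p - fst p) / (1 * pdfQ \<sigma> Q (snd p))) \<partial>(Q \<Otimes>\<^sub>M lborel))"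
    by (rule I.mutual_information_distr[OF Q.sigma_finite_measure_axioms lborel.sigma_finite_measure_axioms Px _ Py _ Pxy])
       (simp_all add: less_imp_le[OF pdf_pos[OF Q]])
  have eq: "normal_density 0 \<sigma> (snd p - fst p) * log (exp 1) (normal_density 0 \<sigma> (snd p - fst p) / (1 * pdfQ \<sigma> Q (snd p)))
     = normal_density 0 \<sigma> (snd p - fst p) * ln (normal_density 0 \<sigma> (snd p - fst p))
       - normal_density 0 \<sigma> (snd p - fst p) * ln (pdfQ \<sigma> Q (snd p))" for p
  proof -
    have a: "0 < normal_density 0 \<sigma> (snd p - fst p)" using s by (rule normal_density_pos)
    have b: "0 < pdfQ \<sigma> Q (snd p)" by (rule pdf_pos[OF Q])
    show ?thesis using a b by (simp add: log_def ln_div right_diff_distrib)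
  qed
  have i1: "integrable (Q \<Otimes>\<^sub>M lborel) (\<lambda>p. normal_density 0 \<sigma> (snd p - fst p) * ln (normal_density 0 \<sigma> (snd p - fst p)))"
    using trans_int(1)[OF RD philn_int] by simp
  have v1: "(\<integral>p. normal_density 0 \<sigma> (snd p - fst p) * ln (normal_density 0 \<sigma> (snd p - fst p)) \<partial>(Q \<Otimes>\<^sub>M lborel)) = K0"
    using trans_int(2)[OF RD philn_int] unfolding K0_def by simp
  show ?thesis
    unfolding cm MI eq
    by (subst Bochner_Integration.integral_diff[OF i1 f2_int[OF Q]]) (simp only: v1 f2_integral[OF Q])
qed

end

context chan
begin

definition "Fent Q = - (\<integral>y. pdfQ \<sigma> Q y * ln (pdfQ \<sigma> Q y) \<partial>lborel)"

lemma MI_Fent: "supp A Q \<Longrightarrow> chan_MI \<sigma> Q = K0 + Fent Q"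
  using MI_formula unfolding Fent_def by simp

lemma plogp_int:
  assumes Q: "supp A Q"
  shows "integrable lborel (\<lambda>y. pdfQ \<sigma> Q y * ln (pdfQ \<sigma> Q y))"
proof (rule Bochner_Integration.integrable_bound[OF Env_integrable])
  have RD: "real_distribution Q" using Q unfolding supp_def by auto
  have [measurable]: "pdfQ \<sigma> Q \<in> borel_measurable borel" by (rule pdf_measurable[OF RD])
  show "(\<lambda>y. pdfQ \<sigma> Q y * ln (pdfQ \<sigma> Q y)) \<in> borel_measurable lborel" by measurable
  show "AE y in lborel. norm (pdfQ \<sigma> Q y * ln (pdfQ \<sigma> Q y)) \<le> norm (Env y)"
    using plogp_bound[OF Q] by (intro AE_I2) (simp add: order_trans[OF _ abs_ge_self])
qed

lemma Fent_le: assumes Q: "supp A Q" shows "Fent Q \<le> (\<integral>y. Env y \<partial>lborel)"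
proof -
  have "- (\<integral>y. pdfQ \<sigma> Q y * ln (pdfQ \<sigma> Q y) \<partial>lborel) \<le> (\<integral>y. Env y \<partial>lborel)"
  proof -
    have "(\<integral>y. - (pdfQ \<sigma> Q y * ln (pdfQ \<sigma> Q y)) \<partial>lborel) \<le> (\<integral>y. Env y \<partial>lborel)"
      using plogp_int[OF Q] Env_integrable plogp_bound[OF Q]
      by (intro integral_mono) (auto simp: abs_le_iff)
    then show ?thesis by simp
  qed
  then show ?thesis unfolding Fent_def .
qed

definition "reflQ Q = distr Q borel (\<lambda>x. A - x)"

lemma phi_sym: "normal_density 0 \<sigma> (- u) = normal_density 0 \<sigma> u"
  unfolding normal_density_def by simp

lemma refl_supp: assumes Q: "supp A Q" shows "supp A (reflQ Q)"
proof -
  have RD: "real_distribution Q" using Q unfolding supp_def by auto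
  interpret Q: real_distribution Q by fact
  have ae: "AE x in Q. 0 \<le> x \<and> x \<le> A" using Q unfolding supp_def by auto
  have "real_distribution (reflQ Q)"
    unfolding reflQ_def real_distribution_def real_distribution_axioms_def
    by (auto intro!: Q.prob_space_distr)
  moreover have "AE x in reflQ Q. 0 \<le> x \<and> x \<le> A"
    unfolding reflQ_def by (subst AE_distr_iff) (use ae in \<open>auto elim: AE_mp\<close>)
  ultimately show ?thesis unfolding supp_def by auto
qed

lemma pdf_refl: assumes Q: "real_distribution Q" shows "pdfQ \<sigma> (reflQ Q) y = pdfQ \<sigma> Q (A - y)"
proof -
  interpret Q: real_distribution Q by fact
  have "pdfQ \<sigma> (reflQ Q) y = (\<integral>x. normal_density 0 \<sigma> (y - (A - x)) \<partial>Q)"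
    unfolding pdfQ_def reflQ_def by (subst integral_distr) simp_all
  also have "\<dots> = pdfQ \<sigma> Q (A - y)"
    unfolding pdfQ_def using phi_sym[of "A - y - _"] by (simp add: algebra_simps)
  finally show ?thesis .
qed

lemma Fent_refl: assumes Q: "supp A Q" shows "Fent (reflQ Q) = Fent Q"
proof -
  have RD: "real_distribution Q" using Q unfolding supp_def by auto
  have "(\<integral>y. pdfQ \<sigma> Q y * ln (pdfQ \<sigma> Q y) \<partial>lborel)
      = \<bar>-1\<bar> *\<^sub>R (\<integral>y. pdfQ \<sigma> Q (A + -1 * y) * ln (pdfQ \<sigma> Q (A + -1 * y)) \<partial>lborel)"
    by (rule lborel_integral_real_affine) simp
  also have "\<dots> = (\<integral>y. pdfQ \<sigma> (reflQ Q) y * ln (pdfQ \<sigma> (reflQ Q) y) \<partial>lborel)"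
    using pdf_refl[OF RD] by simp
  finally show ?thesis unfolding Fent_def by simp
qed

lemma mean_integrable: assumes Q: "supp A Q" shows "integrable Q (\<lambda>x. x)"
proof -
  have RD: "real_distribution Q" using Q unfolding supp_def by auto
  interpret Q: real_distribution Q by fact
  have ae: "AE x in Q. 0 \<le> x \<and> x \<le> A" using Q unfolding supp_def by auto
  show ?thesis by (rule Q.integrable_const_bound[where B=A]) (use ae in \<open>auto elim: AE_mp\<close>)
qed

lemma mean_bounds: assumes Q: "supp A Q" shows "0 \<le> (\<integral>x. x \<partial>Q)" "(\<integral>x. x \<partial>Q) \<le> A"
proof -
  have RD: "real_distribution Q" using Q unfolding supp_def by auto
  interpret Q: real_distribution Q by fact
  have ae: "AE x in Q. 0 \<le> x \<and> x \<le> A" using Q unfolding supp_def by auto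
  show "0 \<le> (\<integral>x. x \<partial>Q)" using ae by (intro integral_nonneg_AE) (auto elim: AE_mp)
  have "(\<integral>x. x \<partial>Q) \<le> (\<integral>x. A \<partial>Q)"
    using ae mean_integrable[OF Q] by (intro integral_mono_AE) (auto elim: AE_mp)
  then show "(\<integral>x. x \<partial>Q) \<le> A" using Q.prob_space by simp
qed

lemma mean_refl: assumes Q: "supp A Q" shows "(\<integral>x. x \<partial>reflQ Q) = A - (\<integral>x. x \<partial>Q)"
proof -
  have RD: "real_distribution Q" using Q unfolding supp_def by auto
  interpret Q: real_distribution Q by fact
  have "(\<integral>x. x \<partial>reflQ Q) = (\<integral>x. A - x \<partial>Q)"
    unfolding reflQ_def by (subst integral_distr) simp_all
  also have "\<dots> = A - (\<integral>x. x \<partial>Q)"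
    using mean_integrable[OF Q] Q.prob_space by simp
  finally show ?thesis .
qed

end

context chan
begin

lemma supp_return: "supp A (return borel 0)"
proof -
  have "real_distribution (return borel (0::real))"
    unfolding real_distribution_def real_distribution_axioms_def
    by (auto intro!: prob_space_return)
  moreover have "AE x in return borel (0::real). 0 \<le> x \<and> x \<le> A"
    by (subst AE_return) (use Apos in auto)
  ultimately show ?thesis unfolding supp_def by auto
qed

lemma phi_isCont: "isCont (\<lambda>x. normal_density 0 \<sigma> (y - x)) x"
  unfolding normal_density_def using s by (intro continuous_intros) auto

lemma supp_meas_1: assumes Q: "supp A Q" shows "measure Q {-1<..A} = 1"
proof -
  have RD: "real_distribution Q" using Q unfolding supp_def by auto
  interpret Q: real_distribution Q by fact
  have ae: "AE x in Q. 0 \<le> x \<and> x \<le> A" using Q unfolding supp_def by auto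
  have "Q.prob {x \<in> space Q. x \<in> {-1<..A}} = 1"
    by (subst Q.prob_Collect_eq_1) (use ae in \<open>auto elim: AE_mp\<close>)
  moreover have "{-1<..A} = {x. -1 < x \<and> x \<le> A}" by auto
  ultimately show ?thesis by simp
qed

lemma limit_supp:
  assumes mu: "\<And>n. supp A (mu n)" and M0: "real_distribution M0" and wc: "weak_conv_m mu M0"
  shows "supp A M0"
proof -
  interpret M0: real_distribution M0 by fact
  have rd: "\<And>n. real_distribution (mu n)" using mu unfolding supp_def by auto
  have key: "AE x in M0. g x = 0"
    if g_cont: "\<And>x. isCont g x" and g_bnd: "\<And>x. 0 \<le> g x \<and> g x \<le> 1"
      and g0: "\<And>x. 0 \<le> x \<Longrightarrow> x \<le> A \<Longrightarrow> g x = 0" for g :: "real \<Rightarrow> real"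
  proof -
    have gm[measurable]: "g \<in> borel_measurable borel"
      using g_cont by (intro borel_measurable_continuous_onI continuous_at_imp_continuous_on) auto
    have conv: "(\<lambda>n. integral\<^sup>L (mu n) g) \<longlonglongrightarrow> integral\<^sup>L M0 g"
      by (rule weak_conv_imp_integral_bdd_continuous_conv[OF rd M0 wc, where B=1])
         (use g_cont g_bnd in auto)
    have z: "integral\<^sup>L (mu n) g = 0" for n
    proof -
      have ae: "AE x in mu n. 0 \<le> x \<and> x \<le> A" using mu[of n] unfolding supp_def by auto
      have gmn: "g \<in> borel_measurable (mu n)"
        using gm by (subst measurable_cong_sets[OF real_distribution.events_eq_borel[OF rd[of n]] refl])
      have "integral\<^sup>L (mu n) g = integral\<^sup>L (mu n) (\<lambda>x. 0)"
        by (rule integral_cong_AE) (use ae g0 gmn in \<open>auto elim: AE_mp\<close>)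
      then show ?thesis by simp
    qed
    have "integral\<^sup>L M0 g = 0"
      using conv unfolding z by (simp add: LIMSEQ_const_iff)
    moreover have "integrable M0 g"
      by (rule M0.integrable_const_bound[where B=1]) (use g_bnd in auto)
    ultimately show ?thesis
      using integral_nonneg_eq_0_iff_AE[of M0 g] g_bnd by auto
  qed
  have a1: "AE x in M0. min 1 (max 0 (x - A)) = 0"
    by (rule key) (auto intro!: continuous_intros)
  have a2: "AE x in M0. min 1 (max 0 (- x)) = 0"
    by (rule key) (auto intro!: continuous_intros)
  have "AE x in M0. 0 \<le> x \<and> x \<le> A"
    using a1 a2 by eventually_elim (auto simp: min_def max_def split: if_splits)
  then show ?thesis unfolding supp_def using M0 by auto
qed

lemma pdf_conv:
  assumes mu: "\<And>n. supp A (mu n)" and M0: "real_distribution M0" and wc: "weak_conv_m mu M0"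
  shows "(\<lambda>n. pdfQ \<sigma> (mu n) y) \<longlonglongrightarrow> pdfQ \<sigma> M0 y"
proof -
  have rd: "\<And>n. real_distribution (mu n)" using mu unfolding supp_def by auto
  show ?thesis unfolding pdfQ_def
    by (rule weak_conv_imp_integral_bdd_continuous_conv[OF rd M0 wc, where B=cc])
       (auto simp: phi_isCont phi_le)
qed

lemma Fent_conv:
  assumes mu: "\<And>n. supp A (mu n)" and M0: "supp A M0" and wc: "weak_conv_m mu M0"
  shows "(\<lambda>n. Fent (mu n)) \<longlonglongrightarrow> Fent M0"
proof -
  have rd: "\<And>n. real_distribution (mu n)" using mu unfolding supp_def by auto
  have rd0: "real_distribution M0" using M0 unfolding supp_def by auto
  have [measurable]: "pdfQ \<sigma> M0 \<in> borel_measurable borel" by (rule pdf_measurable[OF rd0])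
  have [measurable]: "pdfQ \<sigma> (mu n) \<in> borel_measurable borel" for n by (rule pdf_measurable[OF rd])
  have "(\<lambda>n. \<integral>y. pdfQ \<sigma> (mu n) y * ln (pdfQ \<sigma> (mu n) y) \<partial>lborel)
      \<longlonglongrightarrow> (\<integral>y. pdfQ \<sigma> M0 y * ln (pdfQ \<sigma> M0 y) \<partial>lborel)"
  proof (rule integral_dominated_convergence[where w=Env])
    show "(\<lambda>y. pdfQ \<sigma> M0 y * ln (pdfQ \<sigma> M0 y)) \<in> borel_measurable lborel" by measurable
    show "(\<lambda>y. pdfQ \<sigma> (mu n) y * ln (pdfQ \<sigma> (mu n) y)) \<in> borel_measurable lborel" for n by measurable
    show "integrable lborel Env" by (rule Env_integrable)
    show "AE y in lborel. (\<lambda>n. pdfQ \<sigma> (mu n) y * ln (pdfQ \<sigma> (mu n) y)) \<longlonglongrightarrow> pdfQ \<sigma> M0 y * ln (pdfQ \<sigma> M0 y)"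
    proof (rule AE_I2)
      fix y
      have c: "(\<lambda>n. pdfQ \<sigma> (mu n) y) \<longlonglongrightarrow> pdfQ \<sigma> M0 y" by (rule pdf_conv[OF mu rd0 wc])
      have p: "pdfQ \<sigma> M0 y \<noteq> 0" using pdf_pos[OF M0, of y] by simp
      show "(\<lambda>n. pdfQ \<sigma> (mu n) y * ln (pdfQ \<sigma> (mu n) y)) \<longlonglongrightarrow> pdfQ \<sigma> M0 y * ln (pdfQ \<sigma> M0 y)"
        by (intro tendsto_intros c p)
    qed
    show "AE y in lborel. norm (pdfQ \<sigma> (mu n) y * ln (pdfQ \<sigma> (mu n) y)) \<le> Env y" for n
      using plogp_bound[OF mu[of n]] by (intro AE_I2) simp
  qed
  then show ?thesis unfolding Fent_def by (intro tendsto_intros)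
qed

lemma exists_max: "\<exists>Q. supp A Q \<and> (\<forall>Q'. supp A Q' \<longrightarrow> Fent Q' \<le> Fent Q)"
proof -
  let ?S = "{Q. supp A Q}"
  define Mx where "Mx = Sup (Fent ` ?S)"
  have ne: "Fent ` ?S \<noteq> {}" using supp_return by auto
  have bdd: "bdd_above (Fent ` ?S)" using Fent_le by (auto intro!: bdd_aboveI)
  have le: "Fent Q \<le> Mx" if "supp A Q" for Q
    unfolding Mx_def using that bdd by (intro cSup_upper) auto
  have "\<exists>Q. supp A Q \<and> Mx - 1 / Suc n < Fent Q" for n
  proof -
    have "Mx - 1 / Suc n < Mx" by simp
    then obtain v where "v \<in> Fent ` ?S" "Mx - 1 / Suc n < v"
      unfolding Mx_def using less_cSup_iff[OF ne bdd] by blast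
    then show ?thesis by auto
  qed
  then obtain Qs where Qs: "\<And>n. supp A (Qs n)" "\<And>n. Mx - 1 / Suc n < Fent (Qs n)"
    by metis
  have rd: "\<And>n. real_distribution (Qs n)" using Qs unfolding supp_def by auto
  have tight: "tight Qs"
    unfolding tight_def
  proof (intro conjI allI impI)
    show "real_distribution (Qs n)" for n by (rule rd)
    fix e :: real assume "0 < e"
    show "\<exists>a b. a < b \<and> (\<forall>n. 1 - e < measure (Qs n) {a<..b})"
      using supp_meas_1[OF Qs(1)] Apos \<open>0 < e\<close> by (intro exI[of _ "-1"] exI[of _ A]) auto
  qed
  obtain r M0 where r: "strict_mono r" and M0: "real_distribution M0"
      and wc: "weak_conv_m (Qs \<circ> id \<circ> r) M0"
    using tight_imp_convergent_subsubsequence[OF tight, of id] by (auto simp: strict_mono_def)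
  have wc': "weak_conv_m (\<lambda>n. Qs (r n)) M0" using wc by (simp add: comp_def)
  have mu: "\<And>n. supp A (Qs (r n))" using Qs by auto
  have S0: "supp A M0" by (rule limit_supp[OF mu M0 wc'])
  have c1: "(\<lambda>n. Fent (Qs (r n))) \<longlonglongrightarrow> Fent M0" by (rule Fent_conv[OF mu S0 wc'])
  have c2: "(\<lambda>n. Fent (Qs (r n))) \<longlonglongrightarrow> Mx"
  proof (rule tendsto_sandwich[where f="\<lambda>n. Mx - 1 / Suc (r n)" and h="\<lambda>n. Mx"])
    show "\<forall>\<^sub>F n in sequentially. Mx - 1 / Suc (r n) \<le> Fent (Qs (r n))"
    proof (intro always_eventually allI)
      fix n show "Mx - 1 / Suc (r n) \<le> Fent (Qs (r n))" using Qs(2)[of "r n"] by linarith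
    qed
    show "\<forall>\<^sub>F n in sequentially. Fent (Qs (r n)) \<le> Mx" using le mu by auto
    show "(\<lambda>n. Mx) \<longlonglongrightarrow> Mx" by simp
    have "(\<lambda>n. 1 / real (Suc (r n))) \<longlonglongrightarrow> 0"
    proof -
      have "filterlim (\<lambda>n. Suc (r n)) at_top sequentially"
        using filterlim_subseq[OF r] filterlim_Suc by (rule filterlim_compose[rotated])
      then have "filterlim (\<lambda>n. real (Suc (r n))) at_top sequentially"
        by (rule filterlim_compose[OF filterlim_real_sequentially])
      then show ?thesis by (intro tendsto_divide_0[OF tendsto_const]) (simp add: filterlim_at_top_imp_at_infinity)
    qed
    then show "(\<lambda>n. Mx - 1 / Suc (r n)) \<longlonglongrightarrow> Mx"
      using tendsto_diff[OF tendsto_const[of Mx]] by fastforce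
  qed
  have "Fent M0 = Mx" using LIMSEQ_unique[OF c1 c2] .
  then show ?thesis using S0 le by auto
qed

end

context chan
begin

lemma NN_as_distr: "distr std_normal_distribution borel (\<lambda>x. \<sigma> * x) = NN"
proof -
  interpret S: prob_space std_normal_distribution by (rule prob_space_normal_density) simp
  have X: "distributed std_normal_distribution lborel (\<lambda>x. x) (normal_density 0 1)"
    unfolding distributed_def by (simp add: distr_id2)
  have "distributed std_normal_distribution lborel (\<lambda>x. 0 + \<sigma> * x) (normal_density (0 + \<sigma> * 0) (\<bar>\<sigma>\<bar> * 1))"
    by (rule S.normal_density_affine[OF X]) (use s in auto)
  then have "distr std_normal_distribution lborel (\<lambda>x. \<sigma> * x) = NN"
    using s unfolding distributed_def by simp
  moreover have "distr std_normal_distribution borel (\<lambda>x. \<sigma> * x) = distr std_normal_distribution lborel (\<lambda>x. \<sigma> * x)"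
    by (rule distr_cong) simp_all
  ultimately show ?thesis by simp
qed

lemma char_NN: "char NN t = complex_of_real (exp (- ((t * \<sigma>)^2) / 2))"
proof -
  have "char NN t = (CLINT x|std_normal_distribution. iexp (t * (\<sigma> * x)))"
    unfolding NN_as_distr[symmetric] char_def by (subst integral_distr) simp_all
  also have "\<dots> = char std_normal_distribution (t * \<sigma>)"
    unfolding char_def by (simp add: mult.assoc)
  also have "\<dots> = complex_of_real (exp (- ((t * \<sigma>)^2) / 2))"
    by (simp add: char_std_normal_distribution)
  finally show ?thesis .
qed

lemma char_NN_nz: "char NN t \<noteq> 0"
  unfolding char_NN by simp

lemma char_Y:
  assumes Q: "real_distribution Q"
  shows "char (density lborel (pdfQ \<sigma> Q)) t = char Q t * char NN t"
proof -
  interpret Q: real_distribution Q by fact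
  interpret N: prob_space NN by (rule NN_prob)
  interpret PP: pair_prob_space Q NN ..
  have PM: "prob_space (Q \<Otimes>\<^sub>M NN)" by unfold_locales
  have int: "integrable (Q \<Otimes>\<^sub>M NN) (\<lambda>\<omega>. iexp (t * (fst \<omega> + snd \<omega>)))"
    by (rule prob_space.integrable_iexp[OF PM]) simp_all
  have int': "integrable (Q \<Otimes>\<^sub>M NN) (\<lambda>\<omega>. iexp (t * fst \<omega>) * iexp (t * snd \<omega>))"
    using int by (simp add: exp_add[symmetric] distrib_left algebra_simps)
  have "char (density lborel (pdfQ \<sigma> Q)) t = (CLINT \<omega>|Q \<Otimes>\<^sub>M NN. iexp (t * (case \<omega> of (x, z) \<Rightarrow> x + z)))"
    unfolding distr_Y[OF Q, symmetric] char_def by (subst integral_distr) simp_all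
  also have "\<dots> = (CLINT \<omega>|Q \<Otimes>\<^sub>M NN. iexp (t * fst \<omega>) * iexp (t * snd \<omega>))"
    by (simp add: split_beta exp_add[symmetric] distrib_left algebra_simps)
  also have "\<dots> = (CLINT x|Q. CLINT z|NN. iexp (t * x) * iexp (t * z))"
    using PP.integral_fst'[OF int'] by simp
  also have "\<dots> = (CLINT x|Q. iexp (t * x) * char NN t)"
    unfolding char_def by simp
  also have "\<dots> = char Q t * char NN t"
    unfolding char_def by simp
  finally show ?thesis .
qed

lemma pdf_inj:
  assumes Q0: "real_distribution Q0" and Q1: "real_distribution Q1"
    and ae: "AE y in lborel. pdfQ \<sigma> Q0 y = pdfQ \<sigma> Q1 y"
  shows "Q0 = Q1"
proof -
  have eqd: "density lborel (\<lambda>y. ennreal (pdfQ \<sigma> Q0 y)) = density lborel (\<lambda>y. ennreal (pdfQ \<sigma> Q1 y))"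
    using ae pdf_measurable[OF Q0] pdf_measurable[OF Q1] by (intro density_cong) (auto elim: AE_mp)
  have "char Q0 t * char NN t = char Q1 t * char NN t" for t
  proof -
    have "char Q0 t * char NN t = char (density lborel (\<lambda>y. ennreal (pdfQ \<sigma> Q0 y))) t"
      using char_Y[OF Q0, of t] by (simp only:)
    also have "\<dots> = char (density lborel (\<lambda>y. ennreal (pdfQ \<sigma> Q1 y))) t" by (simp only: eqd)
    also have "\<dots> = char Q1 t * char NN t" using char_Y[OF Q1, of t] by (simp only:)
    finally show ?thesis .
  qed
  then have "char Q0 = char Q1" using char_NN_nz by (intro ext) (metis mult_right_cancel)
  then show ?thesis by (rule Levy_uniqueness[OF Q0 Q1])
qed

end

lemma mixture:
  assumes Q0: "real_distribution Q0" and Q1: "real_distribution Q1"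
  shows "\<exists>Qm. real_distribution Qm \<and> (\<forall>(h::real \<Rightarrow> real) B. h \<in> borel_measurable borel \<longrightarrow> (\<forall>x. \<bar>h x\<bar> \<le> B) \<longrightarrow>
            (\<integral>x. h x \<partial>Qm) = ((\<integral>x. h x \<partial>Q0) + (\<integral>x. h x \<partial>Q1)) / 2)"
proof -
  define C where "C = measure_pmf (pmf_of_set (UNIV :: bool set))"
  interpret C: prob_space C unfolding C_def by (rule measure_pmf.prob_space_axioms)
  interpret Q0: real_distribution Q0 by fact
  interpret Q1: real_distribution Q1 by fact
  interpret P01: pair_prob_space Q0 Q1 ..
  have P01: "prob_space (Q0 \<Otimes>\<^sub>M Q1)" by unfold_locales
  interpret P: pair_prob_space C "Q0 \<Otimes>\<^sub>M Q1"
    using C.prob_space_axioms P01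
    by (simp add: pair_prob_space_def pair_sigma_finite_def prob_space_imp_sigma_finite)
  have PM: "prob_space (C \<Otimes>\<^sub>M (Q0 \<Otimes>\<^sub>M Q1))" by unfold_locales
  have FM: "finite_measure (C \<Otimes>\<^sub>M (Q0 \<Otimes>\<^sub>M Q1))" using PM by (simp add: prob_space_def)
  have F01: "finite_measure (Q0 \<Otimes>\<^sub>M Q1)" using P01 by (simp add: prob_space_def)
  define g where "g = (\<lambda>\<omega>::bool \<times> (real \<times> real). if fst \<omega> then fst (snd \<omega>) else snd (snd \<omega>))"
  have sC[simp]: "sets C = UNIV" unfolding C_def by simp
  have pr: "Measurable.pred (C \<Otimes>\<^sub>M (Q0 \<Otimes>\<^sub>M Q1)) (\<lambda>\<omega>. fst \<omega>)"
  proof -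
    have eq: "{\<omega> \<in> space (C \<Otimes>\<^sub>M (Q0 \<Otimes>\<^sub>M Q1)). fst \<omega>} = {True} \<times> space (Q0 \<Otimes>\<^sub>M Q1)"
      by (auto simp: space_pair_measure C_def)
    have "{True} \<times> space (Q0 \<Otimes>\<^sub>M Q1) \<in> sets (C \<Otimes>\<^sub>M (Q0 \<Otimes>\<^sub>M Q1))"
      by (rule pair_measureI[OF _ sets.top]) simp
    then show ?thesis unfolding pred_def eq .
  qed
  have f0: "fst \<in> measurable (Q0 \<Otimes>\<^sub>M Q1) borel"
    using measurable_fst[of Q0 Q1] by (simp add: measurable_cong_sets[OF refl Q0.events_eq_borel])
  have s0: "snd \<in> measurable (Q0 \<Otimes>\<^sub>M Q1) borel"
    using measurable_snd[of Q0 Q1] by (simp add: measurable_cong_sets[OF refl Q1.events_eq_borel])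
  have m1: "(\<lambda>\<omega>. fst (snd \<omega>)) \<in> measurable (C \<Otimes>\<^sub>M (Q0 \<Otimes>\<^sub>M Q1)) borel"
    by (rule measurable_compose[OF measurable_snd f0])
  have m2: "(\<lambda>\<omega>. snd (snd \<omega>)) \<in> measurable (C \<Otimes>\<^sub>M (Q0 \<Otimes>\<^sub>M Q1)) borel"
    by (rule measurable_compose[OF measurable_snd s0])
  have gm[measurable]: "g \<in> measurable (C \<Otimes>\<^sub>M (Q0 \<Otimes>\<^sub>M Q1)) borel"
    unfolding g_def by (rule measurable_If[OF m1 m2 pr[unfolded pred_def]])
  define Qm where "Qm = distr (C \<Otimes>\<^sub>M (Q0 \<Otimes>\<^sub>M Q1)) borel g"
  have RDm: "real_distribution Qm"
    unfolding Qm_def real_distribution_def real_distribution_axioms_def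
    using prob_space.prob_space_distr[OF PM gm] by simp
  have avg: "(\<integral>x. h x \<partial>Qm) = ((\<integral>x. h x \<partial>Q0) + (\<integral>x. h x \<partial>Q1)) / 2"
    if hm[measurable]: "h \<in> borel_measurable borel" and hb: "\<forall>x. \<bar>h x\<bar> \<le> B" for h :: "real \<Rightarrow> real" and B
  proof -
    have int: "integrable (C \<Otimes>\<^sub>M (Q0 \<Otimes>\<^sub>M Q1)) (\<lambda>\<omega>. h (g \<omega>))"
      by (rule finite_measure.integrable_const_bound[OF FM, where B=B]) (use hb in auto)
    have int01: "integrable (Q0 \<Otimes>\<^sub>M Q1) (\<lambda>ab. h (fst ab))" "integrable (Q0 \<Otimes>\<^sub>M Q1) (\<lambda>ab. h (snd ab))"
      by (rule finite_measure.integrable_const_bound[OF F01, where B=B]; use hb in simp)+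
    have G1: "(\<integral>ab. h (fst ab) \<partial>(Q0 \<Otimes>\<^sub>M Q1)) = (\<integral>x. h x \<partial>Q0)"
      using P01.integral_fst'[OF int01(1)] Q1.prob_space by simp
    have G2: "(\<integral>ab. h (snd ab) \<partial>(Q0 \<Otimes>\<^sub>M Q1)) = (\<integral>x. h x \<partial>Q1)"
      using P01.integral_fst'[OF int01(2)] Q0.prob_space by simp
    have "(\<integral>x. h x \<partial>Qm) = (\<integral>\<omega>. h (g \<omega>) \<partial>(C \<Otimes>\<^sub>M (Q0 \<Otimes>\<^sub>M Q1)))"
      unfolding Qm_def by (rule integral_distr) simp_all
    also have "\<dots> = (\<integral>c. (\<integral>ab. h (g (c, ab)) \<partial>(Q0 \<Otimes>\<^sub>M Q1)) \<partial>C)"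
      using P.integral_fst'[OF int] by simp
    also have "\<dots> = ((\<integral>ab. h (g (True, ab)) \<partial>(Q0 \<Otimes>\<^sub>M Q1)) + (\<integral>ab. h (g (False, ab)) \<partial>(Q0 \<Otimes>\<^sub>M Q1))) / 2"
      unfolding C_def by (subst integral_pmf_of_set) (simp_all add: UNIV_bool add.commute)
    also have "\<dots> = ((\<integral>x. h x \<partial>Q0) + (\<integral>x. h x \<partial>Q1)) / 2"
      unfolding g_def using G1 G2 by simp
    finally show ?thesis .
  qed
  show ?thesis using RDm avg by blast
qed

lemma aux_avg:
  fixes u p v q :: real
  assumes "u \<le> p" "v \<le> q"
  shows "0 \<le> ((p - u) + (q - v)) / 2" and "((p - u) + (q - v)) / 2 = 0 \<Longrightarrow> u = p"
proof -
  have "0 \<le> (p - u) + (q - v)" using assms by simp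
  then show "0 \<le> ((p - u) + (q - v)) / 2" by simp
  assume "((p - u) + (q - v)) / 2 = 0"
  then have "(p - u) + (q - v) = 0" by simp
  moreover have "0 \<le> p - u" "0 \<le> q - v" using assms by simp_all
  ultimately show "u = p" by simp
qed

lemma xlnx_ineq:
  fixes a m :: real assumes a: "0 < a" and m: "0 < m"
  shows "a * ln m + (a - m) \<le> a * ln a" and "a * ln m + (a - m) = a * ln a \<Longrightarrow> a = m"
proof -
  have q: "0 < m / a" using a m by simp
  have l: "ln (m / a) = ln m - ln a" using a m by (simp add: ln_div)
  have "ln (m / a) \<le> m / a - 1" by (rule ln_le_minus_one[OF q])
  then have "a * ln (m / a) \<le> a * (m / a - 1)" using a by (intro mult_left_mono) auto
  also have "a * (m / a - 1) = m - a" using a by (simp add: field_simps)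
  finally show "a * ln m + (a - m) \<le> a * ln a" unfolding l by (simp add: algebra_simps)
  assume eq: "a * ln m + (a - m) = a * ln a"
  then have "a * ln (m / a) = m - a" unfolding l by (simp add: algebra_simps)
  then have "ln (m / a) = m / a - 1" using a by (simp add: field_simps)
  then have "m / a = 1" by (rule ln_eq_minus_one[OF q])
  then show "a = m" using a by (simp add: field_simps)
qed

lemma concav:
  fixes a b :: real assumes a: "0 < a" and b: "0 < b"
  shows "0 \<le> (a * ln a + b * ln b) / 2 - ((a + b) / 2) * ln ((a + b) / 2)"
    and "(a * ln a + b * ln b) / 2 - ((a + b) / 2) * ln ((a + b) / 2) = 0 \<Longrightarrow> a = b"
proof -
  let ?m = "(a + b) / 2"
  have m: "0 < ?m" using a b by simp
  note ia = xlnx_ineq[OF a m] and ib = xlnx_ineq[OF b m]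
  have e: "(a * ln a + b * ln b) / 2 - ?m * ln ?m
     = ((a * ln a - (a * ln ?m + (a - ?m))) + (b * ln b - (b * ln ?m + (b - ?m)))) / 2"
    by (simp add: field_simps)
  show "0 \<le> (a * ln a + b * ln b) / 2 - ?m * ln ?m" unfolding e by (rule aux_avg(1)[OF ia(1) ib(1)])
  assume "(a * ln a + b * ln b) / 2 - ?m * ln ?m = 0"
  then have "a * ln ?m + (a - ?m) = a * ln a" unfolding e by (rule aux_avg(2)[OF ia(1) ib(1)])
  then have "a = ?m" by (rule ia(2))
  then show "a = b" by simp
qed

context chan
begin

lemma supp_zero_AE:
  assumes Q: "real_distribution Q" and ig: "(\<integral>x. indicator {x. x < 0 \<or> A < x} x \<partial>Q) = (0::real)"
  shows "AE x in Q. 0 \<le> x \<and> x \<le> A"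
proof -
  interpret Q: real_distribution Q by fact
  have int: "integrable Q (\<lambda>x. indicator {x. x < 0 \<or> A < x} x :: real)"
    by (rule Q.integrable_const_bound[where B=1]) auto
  have nn: "AE x in Q. 0 \<le> (indicator {x. x < 0 \<or> A < x} x :: real)" by simp
  have "AE x in Q. (indicator {x. x < 0 \<or> A < x} x :: real) = 0"
    using integral_nonneg_eq_0_iff_AE[OF int nn, THEN iffD1, OF ig] .
  then show ?thesis by eventually_elim (simp only: indicator_eq_0_iff, auto)
qed

lemma supp_int_zero:
  assumes Q: "supp A Q" shows "(\<integral>x. indicator {x. x < 0 \<or> A < x} x \<partial>Q) = (0::real)"
proof -
  have ae: "AE x in Q. 0 \<le> x \<and> x \<le> A" using Q unfolding supp_def by auto
  have RD: "real_distribution Q" using Q unfolding supp_def by auto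
  have "AE x in Q. (indicator {x. x < 0 \<or> A < x} x :: real) = 0"
    using ae by eventually_elim (auto simp: indicator_def)
  then show ?thesis by (rule integral_eq_zero_AE)
qed

lemma max_unique:
  assumes Q0: "supp A Q0" and Q1: "supp A Q1"
    and m0: "\<forall>Q. supp A Q \<longrightarrow> Fent Q \<le> Fent Q0" and m1: "\<forall>Q. supp A Q \<longrightarrow> Fent Q \<le> Fent Q1"
  shows "Q0 = Q1"
proof -
  have RD0: "real_distribution Q0" using Q0 unfolding supp_def by auto
  have RD1: "real_distribution Q1" using Q1 unfolding supp_def by auto
  obtain Qm where RDm: "real_distribution Qm" and avg: "\<And>(h::real \<Rightarrow> real) B. h \<in> borel_measurable borel \<Longrightarrow> (\<forall>x. \<bar>h x\<bar> \<le> B) \<Longrightarrow>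
            (\<integral>x. h x \<partial>Qm) = ((\<integral>x. h x \<partial>Q0) + (\<integral>x. h x \<partial>Q1)) / 2"
    using mixture[OF RD0 RD1] by blast
  have Qm: "supp A Qm"
  proof -
    have "(\<integral>x. indicator {x. x < 0 \<or> A < x} x \<partial>Qm) = (0::real)"
      using avg[of "indicator {x. x < 0 \<or> A < x} :: real \<Rightarrow> real" 1] supp_int_zero[OF Q0] supp_int_zero[OF Q1] by simp
    then show ?thesis unfolding supp_def using supp_zero_AE[OF RDm] RDm by auto
  qed
  have pm: "pdfQ \<sigma> Qm y = (pdfQ \<sigma> Q0 y + pdfQ \<sigma> Q1 y) / 2" for y
    unfolding pdfQ_def
    by (rule avg[where B=cc]) (auto simp: phi_le)
  have eqF: "Fent Q0 = Fent Q1" using m0 m1 Q0 Q1 by (auto intro: antisym)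
  have leF: "Fent Qm \<le> Fent Q0" using m0 Qm by auto
  define p0 where "p0 = pdfQ \<sigma> Q0"
  define p1 where "p1 = pdfQ \<sigma> Q1"
  define D where "D y = (p0 y * ln (p0 y) + p1 y * ln (p1 y)) / 2 - ((p0 y + p1 y) / 2) * ln ((p0 y + p1 y) / 2)" for y
  have pos0: "0 < p0 y" for y unfolding p0_def by (rule pdf_pos[OF Q0])
  have pos1: "0 < p1 y" for y unfolding p1_def by (rule pdf_pos[OF Q1])
  have Dnn: "0 \<le> D y" for y unfolding D_def by (rule concav(1)[OF pos0 pos1])
  have Deq: "D y = (p0 y * ln (p0 y) + p1 y * ln (p1 y)) / 2 - pdfQ \<sigma> Qm y * ln (pdfQ \<sigma> Qm y)" for y
    unfolding D_def pm p0_def p1_def ..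
  have i0: "integrable lborel (\<lambda>y. p0 y * ln (p0 y))" unfolding p0_def by (rule plogp_int[OF Q0])
  have i1: "integrable lborel (\<lambda>y. p1 y * ln (p1 y))" unfolding p1_def by (rule plogp_int[OF Q1])
  have im: "integrable lborel (\<lambda>y. pdfQ \<sigma> Qm y * ln (pdfQ \<sigma> Qm y))" by (rule plogp_int[OF Qm])
  have iD: "integrable lborel D" unfolding Deq[abs_def] using i0 i1 im by simp
  have "(\<integral>y. D y \<partial>lborel) = ((\<integral>y. p0 y * ln (p0 y) \<partial>lborel) + (\<integral>y. p1 y * ln (p1 y) \<partial>lborel)) / 2
          - (\<integral>y. pdfQ \<sigma> Qm y * ln (pdfQ \<sigma> Qm y) \<partial>lborel)"
    unfolding Deq[abs_def] using i0 i1 im by simp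
  also have "\<dots> = Fent Qm - Fent Q0"
    using eqF unfolding Fent_def p0_def p1_def by simp
  finally have "(\<integral>y. D y \<partial>lborel) \<le> 0" using leF by simp
  moreover have "0 \<le> (\<integral>y. D y \<partial>lborel)" using Dnn by (intro integral_nonneg_AE) auto
  ultimately have "(\<integral>y. D y \<partial>lborel) = 0" by simp
  then have "AE y in lborel. D y = 0" using integral_nonneg_eq_0_iff_AE[OF iD] Dnn by auto
  then have "AE y in lborel. pdfQ \<sigma> Q0 y = pdfQ \<sigma> Q1 y"
  proof eventually_elim
    case (elim y) then show ?case using concav(2)[OF pos0 pos1, of y] unfolding D_def p0_def p1_def by simp
  qed
  then show ?thesis by (rule pdf_inj[OF RD0 RD1])
qed

lemma optimum:
  "\<exists>Q. supp A Q \<and> (\<forall>Q'. supp A Q' \<longrightarrow> Fent Q' \<le> Fent Q) \<and> (\<integral>x. x \<partial>Q) = A / 2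
     \<and> (\<forall>Q'. supp A Q' \<and> (\<forall>Q''. supp A Q'' \<longrightarrow> Fent Q'' \<le> Fent Q') \<longrightarrow> Q' = Q)"
proof -
  obtain Q where Q: "supp A Q" and mx: "\<forall>Q'. supp A Q' \<longrightarrow> Fent Q' \<le> Fent Q"
    using exists_max by blast
  have uq: "Q' = Q" if "supp A Q'" "\<forall>Q''. supp A Q'' \<longrightarrow> Fent Q'' \<le> Fent Q'" for Q'
    using max_unique[OF that(1) Q that(2) mx] by simp
  have "reflQ Q = Q"
    using uq[of "reflQ Q"] refl_supp[OF Q] Fent_refl[OF Q] mx by simp
  then have "(\<integral>x. x \<partial>Q) = A - (\<integral>x. x \<partial>Q)" using mean_refl[OF Q] by simp
  then have "(\<integral>x. x \<partial>Q) = A / 2" by simp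
  then show ?thesis using Q mx uq by blast
qed

end

context chan
begin

lemma adm_iff: "admissible A E Q \<longleftrightarrow> supp A Q \<and> (\<integral>x. x \<partial>Q) \<le> E"
proof
  assume adm: "admissible A E Q"
  then have RD: "real_distribution Q"
    unfolding admissible_def real_distribution_def real_distribution_axioms_def by auto
  interpret Q: real_distribution Q by fact
  have m0: "measure Q {x. A < x} = 0" using adm unfolding admissible_def by auto
  have "AE x in Q. x \<notin> {x. A < x}"
    using Q.prob_eq_0[of "{x. A < x}"] m0 by simp
  moreover have "AE x in Q. 0 \<le> x" using adm unfolding admissible_def by auto
  ultimately have "AE x in Q. 0 \<le> x \<and> x \<le> A" by eventually_elim auto
  then show "supp A Q \<and> (\<integral>x. x \<partial>Q) \<le> E"
    using RD adm unfolding supp_def admissible_def by auto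
next
  assume a: "supp A Q \<and> (\<integral>x. x \<partial>Q) \<le> E"
  then have RD: "real_distribution Q" unfolding supp_def by auto
  interpret Q: real_distribution Q by fact
  have ae: "AE x in Q. 0 \<le> x \<and> x \<le> A" using a unfolding supp_def by auto
  have "AE x in Q. x \<notin> {x. A < x}" using ae by eventually_elim auto
  then have "measure Q {x. A < x} = 0"
    using Q.prob_eq_0[of "{x. A < x}"] by simp
  moreover have "AE x in Q. 0 \<le> x" using ae by eventually_elim auto
  ultimately show "admissible A E Q"
    using a Q.prob_space_axioms unfolding admissible_def by auto
qed

lemma main_E:
  "\<exists>Qs. supp A Qs \<and> (\<integral>x. x \<partial>Qs) = A / 2 \<and>
     (\<forall>E. A / 2 \<le> E \<longrightarrow> capacity \<sigma> A E = chan_MI \<sigma> Qs \<and> (\<forall>Q. achieves_capacity \<sigma> A E Q \<longleftrightarrow> Q = Qs))"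
proof -
  obtain Qs where Qs: "supp A Qs" and mx: "\<forall>Q'. supp A Q' \<longrightarrow> Fent Q' \<le> Fent Qs"
    and mean: "(\<integral>x. x \<partial>Qs) = A / 2"
    and uq: "\<forall>Q'. supp A Q' \<and> (\<forall>Q''. supp A Q'' \<longrightarrow> Fent Q'' \<le> Fent Q') \<longrightarrow> Q' = Qs"
    using optimum by blast
  have cap: "capacity \<sigma> A E = chan_MI \<sigma> Qs" if E: "A / 2 \<le> E" for E
    unfolding capacity_def
  proof (rule cSup_eq_maximum)
    show "chan_MI \<sigma> Qs \<in> chan_MI \<sigma> ` {Q. admissible A E Q}"
      using Qs mean E by (auto simp: adm_iff)
    fix v assume "v \<in> chan_MI \<sigma> ` {Q. admissible A E Q}"
    then obtain Q where "admissible A E Q" "v = chan_MI \<sigma> Q" by auto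
    then have "supp A Q" "v = chan_MI \<sigma> Q" by (auto simp: adm_iff)
    then show "v \<le> chan_MI \<sigma> Qs" using mx MI_Fent Qs by auto
  qed
  have ach: "achieves_capacity \<sigma> A E Q \<longleftrightarrow> Q = Qs" if E: "A / 2 \<le> E" for E Q
  proof
    assume "achieves_capacity \<sigma> A E Q"
    then have Q: "supp A Q" and eq: "chan_MI \<sigma> Q = chan_MI \<sigma> Qs"
      unfolding achieves_capacity_def using cap[OF E] by (auto simp: adm_iff)
    then have "Fent Q = Fent Qs" using MI_Fent Qs by simp
    then show "Q = Qs" using uq Q mx by auto
  next
    assume "Q = Qs"
    then show "achieves_capacity \<sigma> A E Q"
      unfolding achieves_capacity_def using cap[OF E] Qs mean E by (auto simp: adm_iff)
  qed
  show ?thesis using Qs mean cap ach by blast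
qed

end

theorem lemma1:
  fixes \<sigma> A \<alpha> :: real
  assumes "\<sigma> > 0" and "A > 0" and "1/2 < \<alpha>" and "\<alpha> \<le> 1"
  shows "(\<exists>!Q. achieves_capacity \<sigma> A (\<alpha> * A) Q)
    \<and> (\<forall>Q. achieves_capacity \<sigma> A (\<alpha> * A) Q \<longrightarrow> (\<integral>x. x \<partial>Q) / A = 1/2)
    \<and> capacity \<sigma> A (\<alpha> * A) = capacity \<sigma> A (A / 2)"
proof -
  interpret chan \<sigma> A using assms by unfold_locales
  obtain Qs where mean: "(\<integral>x. x \<partial>Qs) = A / 2"
    and M: "\<And>E. A / 2 \<le> E \<Longrightarrow> capacity \<sigma> A E = chan_MI \<sigma> Qs \<and> (\<forall>Q. achieves_capacity \<sigma> A E Q \<longleftrightarrow> Q = Qs)"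
    using main_E by blast
  have E1: "A / 2 \<le> \<alpha> * A" using assms by simp
  have E2: "A / 2 \<le> A / 2" by simp
  note M1 = M[OF E1] and M2 = M[OF E2]
  have "\<exists>!Q. achieves_capacity \<sigma> A (\<alpha> * A) Q" using M1 by auto
  moreover have "\<forall>Q. achieves_capacity \<sigma> A (\<alpha> * A) Q \<longrightarrow> (\<integral>x. x \<partial>Q) / A = 1/2"
    using M1 mean assms by auto
  moreover have "capacity \<sigma> A (\<alpha> * A) = capacity \<sigma> A (A / 2)" using M1 M2 by simp
  ultimately show ?thesis by blast
qed


end
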